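(* Consider the single-sensor Markov decision process with state $(x,q)$, where $x\in\{1,2,3,\dots\}$ and $q\in\{1,\dots,Q\}$, action $s\in\{0,1\}$, and transitions: the next state is $(x+1,q')$ if $s=0$ and $(1,q')$ if $s=1$, where $q'$ is drawn with probability $p_{q,q'}$ independently of $x$ and $s$. The one-step cost is $C_X(x,q,s)+\lambda C_Q(x,q,s)$ with $C_X(x,q,s)=x+Ws$ and $C_Q(x,q,s)=\omega(q)s$, for fixed constants $W\ge 0$ and $\lambda\ge 0$. Then there is an optimal stationary deterministic policy for minimizing the long-run average cost $$\lim_{T\to\infty}\frac{1}{T}\mathbb{E}_\pi\Big[\sum_{t=1}^T \big(C_X(x(t),q(t),s(t))+\lambda C_Q(x(t),q(t),s(t))\big)\Big]$$ that has a threshold structure: for each channel state $q$ there exists a finite threshold $\tau_q$ such that the optimal action is $s^*(x,q)=1$ whenever $x\ge \tau_q$ and $s^*(x,q)=0$ whenever $x<\tau_q$. *)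

theory Defs
  imports Complex_Main "HOL-Library.Extended_Real" "HOL-Library.Liminf_Limsup"
begin

(* State: (x, q) with x >= 1 the age, q in {1..Q} the channel state. Action s in {0,1}. *)
type_synonym state = "nat \<times> nat"

(* A history: list of past (state, action) pairs.  A (general, history-dependent,
   randomized) policy maps the history and the current state to a probability
   of each action s \<in> {0,1}. *)
type_synonym policy = "(state \<times> nat) list \<Rightarrow> state \<Rightarrow> nat \<Rightarrow> real"

definition valid_policy :: "policy \<Rightarrow> bool" where
  "valid_policy \<pi> \<longleftrightarrow>
     (\<forall>h st s. 0 \<le> \<pi> h st s) \<and> (\<forall>h st. \<pi> h st 0 + \<pi> h st 1 = 1)"

definition stat_det :: "(nat \<Rightarrow> nat \<Rightarrow> nat) \<Rightarrow> policy" where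
  "stat_det \<mu> = (\<lambda>h st s. if s = \<mu> (fst st) (snd st) then 1 else 0)"

definition C_X :: "real \<Rightarrow> nat \<Rightarrow> nat \<Rightarrow> nat \<Rightarrow> real" where
  "C_X W x q s = real x + W * real s"

definition C_Q :: "(nat \<Rightarrow> real) \<Rightarrow> nat \<Rightarrow> nat \<Rightarrow> nat \<Rightarrow> real" where
  "C_Q \<omega> x q s = \<omega> q * real s"

definition next_age :: "nat \<Rightarrow> nat \<Rightarrow> nat" where
  "next_age x s = (if s = 0 then x + 1 else 1)"

fun exp_cost :: "nat \<Rightarrow> (nat \<Rightarrow> nat \<Rightarrow> real) \<Rightarrow> real \<Rightarrow> real \<Rightarrow> (nat \<Rightarrow> real) \<Rightarrow> policy
                  \<Rightarrow> nat \<Rightarrow> (state \<times> nat) list \<Rightarrow> state \<Rightarrow> real" where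
  "exp_cost Q p W lam \<omega> \<pi> 0 h st = 0"
| "exp_cost Q p W lam \<omega> \<pi> (Suc T) h st =
     (\<Sum>s\<in>{0,1}. \<pi> h st s *
        (C_X W (fst st) (snd st) s + lam * C_Q \<omega> (fst st) (snd st) s +
         (\<Sum>q'\<in>{1..Q}. p (snd st) q' *
            exp_cost Q p W lam \<omega> \<pi> T (h @ [(st, s)]) (next_age (fst st) s, q'))))"

definition avg_cost :: "nat \<Rightarrow> (nat \<Rightarrow> nat \<Rightarrow> real) \<Rightarrow> real \<Rightarrow> real \<Rightarrow> (nat \<Rightarrow> real) \<Rightarrow> policy
                         \<Rightarrow> state \<Rightarrow> ereal" where
  "avg_cost Q p W lam \<omega> \<pi> st0 =
     limsup (\<lambda>T. ereal (exp_cost Q p W lam \<omega> \<pi> T [] st0 / real T))"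

end

theory Submission
  imports Defs "HOL-Library.Diagonal_Subsequence"
begin

fun ev :: "nat \<Rightarrow> (nat \<Rightarrow> nat \<Rightarrow> real) \<Rightarrow> policy \<Rightarrow> (state \<Rightarrow> nat \<Rightarrow> real) \<Rightarrow> (state \<Rightarrow> real)
            \<Rightarrow> nat \<Rightarrow> (state \<times> nat) list \<Rightarrow> state \<Rightarrow> real" where
  "ev Q p \<pi> c F 0 h st = F st"
| "ev Q p \<pi> c F (Suc T) h st =
     (\<Sum>s\<in>{0,1}. \<pi> h st s * (c st s +
         (\<Sum>q'\<in>{1..Q}. p (snd st) q' * ev Q p \<pi> c F T (h @ [(st, s)]) (next_age (fst st) s, q'))))"

lemma exp_cost_ev:
  "exp_cost Q p W lam \<omega> \<pi> T h st =
   ev Q p \<pi> (\<lambda>st s. C_X W (fst st) (snd st) s + lam * C_Q \<omega> (fst st) (snd st) s) (\<lambda>_. 0) T h st"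
  by (induction T arbitrary: h st) auto

lemma ev_lin:
  "ev Q p \<pi> c F T h st = ev Q p \<pi> c (\<lambda>_. 0) T h st + ev Q p \<pi> (\<lambda>_ _. 0) F T h st"
proof (induction T arbitrary: h st)
  case 0 then show ?case by simp
next
  case (Suc T)
  show ?case
    by (simp add: Suc distrib_left sum.distrib algebra_simps)
qed

lemma ev_scale:
  "ev Q p \<pi> (\<lambda>_ _. 0) (\<lambda>st. a * F st) T h st = a * ev Q p \<pi> (\<lambda>_ _. 0) F T h st"
  by (induction T arbitrary: h st) (simp_all add: sum_distrib_left algebra_simps)

definition valid_st :: "nat \<Rightarrow> state \<Rightarrow> bool" where
  "valid_st Q st \<longleftrightarrow> fst st \<ge> 1 \<and> snd st \<in> {1..Q}"

fun DD :: "nat \<Rightarrow> (nat \<Rightarrow> nat \<Rightarrow> real) \<Rightarrow> (nat \<Rightarrow> real) \<Rightarrow> nat \<Rightarrow> nat \<Rightarrow> real" where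
  "DD Q p d 0 q = 0"
| "DD Q p d (Suc T) q = d q + (\<Sum>q'\<in>{1..Q}. p q q' * DD Q p d T q')"

locale chain =
  fixes Q :: nat and p :: "nat \<Rightarrow> nat \<Rightarrow> real"
  assumes Q1: "Q \<ge> 1"
    and p_nonneg: "\<And>q q'. q \<in> {1..Q} \<Longrightarrow> q' \<in> {1..Q} \<Longrightarrow> 0 \<le> p q q'"
    and p_sum: "\<And>q. q \<in> {1..Q} \<Longrightarrow> (\<Sum>q'\<in>{1..Q}. p q q') = 1"
begin

lemma valid_next: "valid_st Q (next_age x s, q')" if "q' \<in> {1..Q}"
  using that by (auto simp: valid_st_def next_age_def)

lemma sumP_const:
  assumes "q \<in> {1..Q}"
  shows "(\<Sum>q'\<in>{1..Q}. p q q' * (f q' + B)) = (\<Sum>q'\<in>{1..Q}. p q q' * f q') + B"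
proof -
  have "(\<Sum>q'\<in>{1..Q}. p q q' * (f q' + B)) = (\<Sum>q'\<in>{1..Q}. p q q' * f q') + (\<Sum>q'\<in>{1..Q}. p q q') * B"
    by (simp add: distrib_left sum.distrib sum_distrib_right)
  then show ?thesis using p_sum[OF assms] by simp
qed

lemma pi_nonneg: "valid_policy \<pi> \<Longrightarrow> 0 \<le> \<pi> h st s"
  unfolding valid_policy_def by blast

lemma pi_sum: "valid_policy \<pi> \<Longrightarrow> \<pi> h st 0 + \<pi> h st 1 = 1"
  unfolding valid_policy_def by blast

lemma pi_sum_const: "valid_policy \<pi> \<Longrightarrow> (\<Sum>s\<in>{0,1}. \<pi> h st s * X) = X"
proof -
  assume a: "valid_policy \<pi>"
  have "(\<Sum>s\<in>{0,1}. \<pi> h st s * X) = (\<pi> h st 0 + \<pi> h st 1) * X" by (simp add: distrib_right)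
  then show ?thesis using pi_sum[OF a, of h st] by simp
qed

lemma ev_add_const:
  assumes "valid_policy \<pi>" "valid_st Q st"
  shows "ev Q p \<pi> (\<lambda>_ _. 0) (\<lambda>st. F st + B) T h st = ev Q p \<pi> (\<lambda>_ _. 0) F T h st + B"
  using assms(2)
proof (induction T arbitrary: h st)
  case 0 then show ?case by simp
next
  case (Suc T)
  have q: "snd st \<in> {1..Q}" using Suc.prems by (simp add: valid_st_def)
  have "ev Q p \<pi> (\<lambda>_ _. 0) (\<lambda>st. F st + B) (Suc T) h st =
     (\<Sum>s\<in>{0,1}. \<pi> h st s * ((\<Sum>q'\<in>{1..Q}. p (snd st) q' * ev Q p \<pi> (\<lambda>_ _. 0) F T (h @ [(st, s)]) (next_age (fst st) s, q')) + B))"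
    using Suc.IH valid_next by (simp add: sumP_const[OF q, simplified])
  also have "\<dots> = ev Q p \<pi> (\<lambda>_ _. 0) F (Suc T) h st + B * (\<pi> h st 0 + \<pi> h st 1)"
    by (simp add: algebra_simps)
  also have "\<dots> = ev Q p \<pi> (\<lambda>_ _. 0) F (Suc T) h st + B"
    using pi_sum[OF assms(1)] by simp
  finally show ?case .
qed

lemma ev_mono:
  assumes "valid_policy \<pi>" "valid_st Q st" "\<And>st. valid_st Q st \<Longrightarrow> F st \<le> G st"
  shows "ev Q p \<pi> (\<lambda>_ _. 0) F T h st \<le> ev Q p \<pi> (\<lambda>_ _. 0) G T h st"
  using assms(2)
proof (induction T arbitrary: h st)
  case 0 then show ?case using assms(3) by simp
next
  case (Suc T)
  have q: "snd st \<in> {1..Q}" using Suc.prems by (simp add: valid_st_def)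
  have pi: "0 \<le> \<pi> h st s" for s using pi_nonneg[OF assms(1)] .
  have inner: "(\<Sum>q'\<in>{1..Q}. p (snd st) q' * ev Q p \<pi> (\<lambda>_ _. 0) F T (h @ [(st, s)]) (next_age (fst st) s, q'))
     \<le> (\<Sum>q'\<in>{1..Q}. p (snd st) q' * ev Q p \<pi> (\<lambda>_ _. 0) G T (h @ [(st, s)]) (next_age (fst st) s, q'))" for s
    by (rule sum_mono, rule mult_left_mono) (use Suc.IH valid_next q p_nonneg in auto)
  show ?case
    unfolding ev.simps
    by (rule sum_mono, rule mult_left_mono) (use inner pi in auto)
qed

lemma bellman_lower:
  assumes pol: "valid_policy \<pi>" and "valid_st Q st"
    and bell: "\<And>st s. valid_st Q st \<Longrightarrow> s \<in> {0,1} \<Longrightarrow>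
        d (snd st) + H st \<le> c st s + (\<Sum>q'\<in>{1..Q}. p (snd st) q' * H (next_age (fst st) s, q'))"
  shows "H st + DD Q p d T (snd st) \<le> ev Q p \<pi> c H T h st"
  using assms(2)
proof (induction T arbitrary: h st)
  case 0 then show ?case by simp
next
  case (Suc T)
  have q: "snd st \<in> {1..Q}" using Suc.prems by (simp add: valid_st_def)
  have each: "H st + DD Q p d (Suc T) (snd st) \<le> c st s +
      (\<Sum>q'\<in>{1..Q}. p (snd st) q' * ev Q p \<pi> c H T (h @ [(st, s)]) (next_age (fst st) s, q'))"
    if s: "s \<in> {0,1}" for s
  proof -
    have "(\<Sum>q'\<in>{1..Q}. p (snd st) q' * (H (next_age (fst st) s, q') + DD Q p d T q'))
       \<le> (\<Sum>q'\<in>{1..Q}. p (snd st) q' * ev Q p \<pi> c H T (h @ [(st, s)]) (next_age (fst st) s, q'))"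
      by (rule sum_mono, rule mult_left_mono) (use Suc.IH valid_next q p_nonneg in auto)
    moreover have "(\<Sum>q'\<in>{1..Q}. p (snd st) q' * (H (next_age (fst st) s, q') + DD Q p d T q'))
       = (\<Sum>q'\<in>{1..Q}. p (snd st) q' * H (next_age (fst st) s, q')) + (\<Sum>q'\<in>{1..Q}. p (snd st) q' * DD Q p d T q')"
      by (simp add: distrib_left sum.distrib)
    moreover have "d (snd st) + H st \<le> c st s + (\<Sum>q'\<in>{1..Q}. p (snd st) q' * H (next_age (fst st) s, q'))"
      using bell[OF Suc.prems s] .
    ultimately show ?thesis by simp
  qed
  have "(\<Sum>s\<in>{0,1}. \<pi> h st s * (H st + DD Q p d (Suc T) (snd st))) \<le> ev Q p \<pi> c H (Suc T) h st"
    unfolding ev.simps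
    by (rule sum_mono, rule mult_left_mono) (use each pi_nonneg[OF pol] in auto)
  moreover have "(\<Sum>s\<in>{0,1}. \<pi> h st s * (H st + DD Q p d (Suc T) (snd st))) = H st + DD Q p d (Suc T) (snd st)"
    by (rule pi_sum_const[OF pol])
  ultimately show ?case by simp
qed

lemma stat_det_sum:
  assumes "m \<in> {0,1}" "\<mu> (fst st) (snd st) = m"
  shows "(\<Sum>s\<in>{0,1}. stat_det \<mu> h st s * f s) = f m"
  using assms by (auto simp: stat_det_def)

lemma bellman_upper:
  assumes "valid_st Q st"
    and bell: "\<And>st. valid_st Q st \<Longrightarrow> \<mu> (fst st) (snd st) \<in> {0,1} \<and>
        c st (\<mu> (fst st) (snd st)) + (\<Sum>q'\<in>{1..Q}. p (snd st) q' * H (next_age (fst st) (\<mu> (fst st) (snd st)), q'))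
          \<le> d (snd st) + H st"
  shows "ev Q p (stat_det \<mu>) c H T h st \<le> H st + DD Q p d T (snd st)"
  using assms(1)
proof (induction T arbitrary: h st)
  case 0 then show ?case by simp
next
  case (Suc T)
  have q: "snd st \<in> {1..Q}" using Suc.prems by (simp add: valid_st_def)
  define m where "m = \<mu> (fst st) (snd st)"
  have m: "m \<in> {0,1}" using bell[OF Suc.prems] m_def by simp
  have "ev Q p (stat_det \<mu>) c H (Suc T) h st = c st m +
      (\<Sum>q'\<in>{1..Q}. p (snd st) q' * ev Q p (stat_det \<mu>) c H T (h @ [(st, m)]) (next_age (fst st) m, q'))"
    unfolding ev.simps by (rule stat_det_sum[OF m]) (simp add: m_def)
  also have "\<dots> \<le> c st m + (\<Sum>q'\<in>{1..Q}. p (snd st) q' * (H (next_age (fst st) m, q') + DD Q p d T q'))"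
    by (rule add_left_mono, rule sum_mono, rule mult_left_mono) (use Suc.IH valid_next q p_nonneg in auto)
  also have "\<dots> = c st m + (\<Sum>q'\<in>{1..Q}. p (snd st) q' * H (next_age (fst st) m, q')) + (\<Sum>q'\<in>{1..Q}. p (snd st) q' * DD Q p d T q')"
    by (simp add: distrib_left sum.distrib)
  also have "\<dots> \<le> d (snd st) + H st + (\<Sum>q'\<in>{1..Q}. p (snd st) q' * DD Q p d T q')"
    using bell[OF Suc.prems] m_def by simp
  finally show ?case by simp
qed

end


locale mdp = chain +
  fixes c :: "nat \<Rightarrow> real" and K :: real
  assumes K_ge: "\<And>q. q \<in> {1..Q} \<Longrightarrow> \<bar>c q\<bar> \<le> K"
begin

lemma K_nonneg: "0 \<le> K"
  using K_ge[of 1] Q1 by auto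

definition PP :: "(nat \<Rightarrow> real) \<Rightarrow> nat \<Rightarrow> real" where
  "PP f q = (\<Sum>q'\<in>{1..Q}. p q q' * f q')"

lemma PP_nonneg: "q \<in> {1..Q} \<Longrightarrow> (\<And>q'. q' \<in> {1..Q} \<Longrightarrow> 0 \<le> f q') \<Longrightarrow> 0 \<le> PP f q"
  unfolding PP_def by (intro sum_nonneg mult_nonneg_nonneg) (auto simp: p_nonneg)

lemma PP_mono: "q \<in> {1..Q} \<Longrightarrow> (\<And>q'. q' \<in> {1..Q} \<Longrightarrow> f q' \<le> g q') \<Longrightarrow> PP f q \<le> PP g q"
  unfolding PP_def by (intro sum_mono mult_left_mono) (auto simp: p_nonneg)

lemma PP_diff: "PP (\<lambda>q'. f q' - g q') q = PP f q - PP g q"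
  unfolding PP_def by (simp add: right_diff_distrib sum_subtractf)

lemma PP_const: "q \<in> {1..Q} \<Longrightarrow> PP (\<lambda>_. B) q = B"
  unfolding PP_def using p_sum by (simp add: sum_distrib_right[symmetric])

lemma PP_add_const: "q \<in> {1..Q} \<Longrightarrow> PP (\<lambda>q'. f q' + B) q = PP f q + B"
  unfolding PP_def using sumP_const by simp

lemma PP_tendsto:
  assumes "\<And>q'. q' \<in> {1..Q} \<Longrightarrow> (\<lambda>k. f k q') \<longlonglongrightarrow> g q'"
  shows "(\<lambda>k. PP (f k) q) \<longlonglongrightarrow> PP g q"
  unfolding PP_def by (intro tendsto_sum tendsto_mult tendsto_const assms) auto

fun VI :: "real \<Rightarrow> nat \<Rightarrow> nat \<Rightarrow> nat \<Rightarrow> real" where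
  "VI \<beta> 0 x q = 0"
| "VI \<beta> (Suc n) x q = real x + K + min (\<beta> * PP (VI \<beta> n (x+1)) q) (c q + \<beta> * PP (VI \<beta> n 1) q)"

context
  fixes \<beta> :: real
  assumes b0: "0 \<le> \<beta>" and b1: "\<beta> < 1"
begin

lemma VI_nonneg: "q \<in> {1..Q} \<Longrightarrow> 0 \<le> VI \<beta> n x q"
proof (induction n arbitrary: x q)
  case 0 then show ?case by simp
next
  case (Suc n)
  have a: "0 \<le> PP (VI \<beta> n (x+1)) q" "0 \<le> PP (VI \<beta> n 1) q"
    using Suc by (auto intro!: PP_nonneg)
  have "0 \<le> K + c q" using K_ge[OF Suc.prems] by auto
  moreover have "0 \<le> \<beta> * PP (VI \<beta> n (x+1)) q" "0 \<le> \<beta> * PP (VI \<beta> n 1) q"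
    using a b0 by auto
  ultimately show ?case using K_nonneg by (simp add: min_def)
qed

lemma VI_mono_x: "q \<in> {1..Q} \<Longrightarrow> x \<le> y \<Longrightarrow> VI \<beta> n x q \<le> VI \<beta> n y q"
proof (induction n arbitrary: x y q)
  case 0 then show ?case by simp
next
  case (Suc n)
  have "PP (VI \<beta> n (x+1)) q \<le> PP (VI \<beta> n (y+1)) q"
    using Suc by (intro PP_mono) auto
  then have "\<beta> * PP (VI \<beta> n (x+1)) q \<le> \<beta> * PP (VI \<beta> n (y+1)) q"
    using b0 by (rule mult_left_mono)
  then show ?case using Suc.prems by (auto simp: min_def)
qed

lemma VI_mono_n: "q \<in> {1..Q} \<Longrightarrow> VI \<beta> n x q \<le> VI \<beta> (Suc n) x q"
proof (induction n arbitrary: x q)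
  case 0 then show ?case using VI_nonneg[of q 1 x] by simp
next
  case (Suc n)
  have "PP (VI \<beta> n (x+1)) q \<le> PP (VI \<beta> (Suc n) (x+1)) q"
    by (rule PP_mono[OF Suc.prems Suc.IH])
  then have 1: "\<beta> * PP (VI \<beta> n (x+1)) q \<le> \<beta> * PP (VI \<beta> (Suc n) (x+1)) q"
    using b0 by (rule mult_left_mono)
  have "PP (VI \<beta> n 1) q \<le> PP (VI \<beta> (Suc n) 1) q"
    by (rule PP_mono[OF Suc.prems Suc.IH])
  then have 2: "\<beta> * PP (VI \<beta> n 1) q \<le> \<beta> * PP (VI \<beta> (Suc n) 1) q"
    using b0 by (rule mult_left_mono)
  show ?case using 1 2 by (simp only: VI.simps)
qed

lemma VI_bound: "q \<in> {1..Q} \<Longrightarrow> VI \<beta> n x q \<le> real x + (2*K+1)/(1-\<beta>)"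
proof (induction n arbitrary: x q)
  case 0
  have "0 \<le> (2*K+1)/(1-\<beta>)" using K_nonneg b1 by simp
  then show ?case by simp
next
  case (Suc n)
  have "PP (VI \<beta> n 1) q \<le> PP (\<lambda>_. 1 + (2*K+1)/(1-\<beta>)) q"
    by (rule PP_mono[OF Suc.prems]) (use Suc.IH[of _ 1] in simp)
  also have "\<dots> = 1 + (2*K+1)/(1-\<beta>)" using PP_const[OF Suc.prems] .
  finally have "\<beta> * PP (VI \<beta> n 1) q \<le> \<beta> * (1 + (2*K+1)/(1-\<beta>))"
    using b0 by (rule mult_left_mono)
  moreover have "\<beta> * (1 + (2*K+1)/(1-\<beta>)) = \<beta> + (2*K+1)/(1-\<beta>) - (2*K+1)"
    using b1 by (simp add: field_simps)
  moreover have "c q \<le> K" using K_ge[OF Suc.prems] by auto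
  moreover have "\<beta> \<le> 1" using b1 by simp
  ultimately show ?case by (simp add: min_def)
qed

definition V :: "nat \<Rightarrow> nat \<Rightarrow> real" where
  "V x q = lim (\<lambda>n. VI \<beta> n x q)"

lemma V_lim: "q \<in> {1..Q} \<Longrightarrow> (\<lambda>n. VI \<beta> n x q) \<longlonglongrightarrow> V x q"
proof -
  assume q: "q \<in> {1..Q}"
  have "incseq (\<lambda>n. VI \<beta> n x q)" using VI_mono_n[OF q] by (simp add: incseq_SucI)
  then obtain L where "(\<lambda>n. VI \<beta> n x q) \<longlonglongrightarrow> L"
    using incseq_convergent VI_bound[OF q] by metis
  then show ?thesis unfolding V_def by (simp add: limI)
qed

lemma V_eq: "q \<in> {1..Q} \<Longrightarrow> V x q = real x + K + min (\<beta> * PP (V (x+1)) q) (c q + \<beta> * PP (V 1) q)"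
proof -
  assume q: "q \<in> {1..Q}"
  have "(\<lambda>n. VI \<beta> (Suc n) x q) \<longlonglongrightarrow> V x q" using V_lim[OF q] by (rule LIMSEQ_Suc)
  moreover have "(\<lambda>n. VI \<beta> (Suc n) x q) \<longlonglongrightarrow> real x + K + min (\<beta> * PP (V (x+1)) q) (c q + \<beta> * PP (V 1) q)"
    unfolding VI.simps
    by (intro tendsto_intros PP_tendsto V_lim)
  ultimately show ?thesis by (rule LIMSEQ_unique)
qed

lemma V_mono_x: "q \<in> {1..Q} \<Longrightarrow> x \<le> y \<Longrightarrow> V x q \<le> V y q"
  by (rule LIMSEQ_le[OF V_lim V_lim]) (auto intro!: exI[of _ 0] VI_mono_x)

lemma V_nonneg: "q \<in> {1..Q} \<Longrightarrow> 0 \<le> V x q"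
  by (rule LIMSEQ_le_const[OF V_lim]) (auto intro!: exI[of _ 0] VI_nonneg)

definition hb :: "nat \<Rightarrow> nat \<Rightarrow> real" where
  "hb x q = V x q - V 1 q"

lemma hb_1: "hb 1 q = 0"
  by (simp add: hb_def)

lemma min_shift: "min (a + t) (b + t) = min a b + (t::real)"
  by (simp add: min_def)

lemma V_eq': "q \<in> {1..Q} \<Longrightarrow> V x q = real x + K + \<beta> * PP (V 1) q + min (\<beta> * PP (hb (x+1)) q) (c q)"
proof -
  assume q: "q \<in> {1..Q}"
  have e: "\<beta> * PP (V (x+1)) q = \<beta> * PP (hb (x+1)) q + \<beta> * PP (V 1) q"
    unfolding hb_def PP_diff by (simp add: algebra_simps)
  have "V x q = real x + K + min (\<beta> * PP (V (x+1)) q) (c q + \<beta> * PP (V 1) q)"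
    by (rule V_eq[OF q])
  also have "\<dots> = real x + K + min (\<beta> * PP (hb (x+1)) q + \<beta> * PP (V 1) q) (c q + \<beta> * PP (V 1) q)"
    by (simp only: e)
  also have "\<dots> = real x + K + \<beta> * PP (V 1) q + min (\<beta> * PP (hb (x+1)) q) (c q)"
    by (simp only: min_shift add.assoc)
  finally show ?thesis .
qed

lemma hb_eq: "q \<in> {1..Q} \<Longrightarrow> hb x q = real x - 1 + min (\<beta> * PP (hb (x+1)) q) (c q) - min (\<beta> * PP (hb 2) q) (c q)"
  using V_eq'[of q x] V_eq'[of q 1] unfolding hb_def[of x] by (simp add: numeral_2_eq_2)

lemma hb_nonneg: "q \<in> {1..Q} \<Longrightarrow> 1 \<le> x \<Longrightarrow> 0 \<le> hb x q"
  unfolding hb_def using V_mono_x by simp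

lemma hb_mono: "q \<in> {1..Q} \<Longrightarrow> x \<le> y \<Longrightarrow> hb x q \<le> hb y q"
  unfolding hb_def using V_mono_x by simp

lemma hb_bound: "q \<in> {1..Q} \<Longrightarrow> 1 \<le> x \<Longrightarrow> hb x q \<le> real x + K"
proof -
  assume q: "q \<in> {1..Q}" and x: "1 \<le> x"
  have "0 \<le> PP (hb 2) q" using q by (intro PP_nonneg hb_nonneg) auto
  then have "0 \<le> \<beta> * PP (hb 2) q" using b0 by simp
  then have "min (\<beta> * PP (hb (x+1)) q) (c q) - min (\<beta> * PP (hb 2) q) (c q) \<le> K"
    using K_ge[OF q] by (auto simp: min_def)
  then show ?thesis using hb_eq[OF q, of x] by simp
qed

end

end


context mdp
begin

definition bet :: "nat \<Rightarrow> real" where "bet k = 1 - 1 / (real k + 2)"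

lemma bet0: "0 \<le> bet k" and bet1: "bet k < 1"
  unfolding bet_def by (auto simp: field_simps)

lemma bet_lim: "bet \<longlonglongrightarrow> 1"
proof -
  have "(\<lambda>k. 1 / (real k + 2)) \<longlonglongrightarrow> 0"
    using LIMSEQ_ignore_initial_segment[OF lim_inverse_n', of 2]
    by (simp add: add.commute)
  then have "(\<lambda>k. 1 - 1 / (real k + 2)) \<longlonglongrightarrow> 1 - 0" by (intro tendsto_intros)
  then show ?thesis unfolding bet_def[abs_def] by simp
qed

definition HH :: "nat \<Rightarrow> nat \<Rightarrow> real" where
  "HH k n = (if 1 \<le> fst (prod_decode n) \<and> snd (prod_decode n) \<in> {1..Q}
             then hb (bet k) (fst (prod_decode n)) (snd (prod_decode n)) else 0)"

lemma HH_bound: "\<bar>HH k n\<bar> \<le> real (fst (prod_decode n)) + K"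
  unfolding HH_def using hb_nonneg[OF bet0 bet1] hb_bound[OF bet0 bet1] K_nonneg by auto

lemma HH_conv_sub: "strict_mono (s::nat\<Rightarrow>nat) \<Longrightarrow> \<exists>r. strict_mono r \<and> convergent (\<lambda>k. HH ((s \<circ> r) k) n)"
proof -
  obtain f where f: "strict_mono f" "monoseq (\<lambda>k. HH (s (f k)) n)"
    using seq_monosub[of "\<lambda>k. HH (s k) n"] by blast
  have "Bseq (\<lambda>k. HH (s (f k)) n)"
    by (rule BseqI'[of _ "real (fst (prod_decode n)) + K"]) (use HH_bound in simp)
  then have "convergent (\<lambda>k. HH (s (f k)) n)" using f(2) Bseq_monoseq_convergent by blast
  then show ?thesis using f(1) by (auto simp: o_def)
qed

lemma exists_diag: "\<exists>r. strict_mono r \<and> (\<forall>n. convergent (\<lambda>k. HH (r k) n))"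
proof -
  interpret S: subseqs "\<lambda>n s. convergent (\<lambda>k. HH (s k) n)"
    by unfold_locales (use HH_conv_sub in blast)
  have "convergent (\<lambda>k. HH (S.diagseq k) n)" for n
  proof -
    have "convergent (\<lambda>k. HH ((S.diagseq \<circ> (+) (Suc n)) k) n)"
    proof (rule S.diagseq_holds)
      fix r s n assume "strict_mono (r :: nat \<Rightarrow> nat)" "convergent (\<lambda>k. HH (s k) n)"
      then show "convergent (\<lambda>k. HH ((s \<circ> r) k) n)"
        using LIMSEQ_subseq_LIMSEQ unfolding convergent_def o_def by fastforce
    qed
    then have "convergent (\<lambda>k. HH (S.diagseq (k + Suc n)) n)" by (simp add: o_def add.commute)
    then show ?thesis by (rule iffD1[OF convergent_ignore_initial_segment])
  qed
  then show ?thesis using S.subseq_diagseq by blast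
qed

lemma exists_h:
  "\<exists>H. (\<forall>q\<in>{1..Q}. H 1 q = 0) \<and>
       (\<forall>x\<ge>1. \<forall>q\<in>{1..Q}. 0 \<le> H x q \<and> H x q \<le> real x + K \<and> H x q \<le> H (x+1) q \<and>
          H x q = real x - 1 + min (PP (H (x+1)) q) (c q) - min (PP (H 2) q) (c q))"
proof -
  obtain r where r: "strict_mono r" "\<And>n. convergent (\<lambda>k. HH (r k) n)"
    using exists_diag by blast
  define H where "H x q = lim (\<lambda>k. HH (r k) (prod_encode (x, q)))" for x q
  have lim: "(\<lambda>k. hb (bet (r k)) x q) \<longlonglongrightarrow> H x q" if "1 \<le> x" "q \<in> {1..Q}" for x q
  proof -
    have "(\<lambda>k. HH (r k) (prod_encode (x, q))) \<longlonglongrightarrow> H x q"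
      unfolding H_def using r(2) convergent_LIMSEQ_iff by blast
    then show ?thesis using that by (simp add: HH_def)
  qed
  have blim: "(\<lambda>k. bet (r k)) \<longlonglongrightarrow> 1"
    using LIMSEQ_subseq_LIMSEQ[OF bet_lim r(1)] by (simp add: o_def)
  have b0': "0 \<le> bet (r k)" and b1': "bet (r k) < 1" for k using bet0 bet1 by auto
  show ?thesis
  proof (intro exI[of _ H] conjI ballI allI impI)
    fix q assume q: "q \<in> {1..Q}"
    have "(\<lambda>k. hb (bet (r k)) 1 q) \<longlonglongrightarrow> H 1 q" using lim q by simp
    moreover have "hb (bet (r k)) 1 q = 0" for k by (rule hb_1[OF b0' b1'])
    ultimately have "(\<lambda>k. 0::real) \<longlonglongrightarrow> H 1 q" by simp
    then show "H 1 q = 0" using LIMSEQ_unique[OF _ tendsto_const] by blast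
  next
    fix x q :: nat assume x: "1 \<le> x" and q: "q \<in> {1..Q}"
    show "0 \<le> H x q"
      by (rule LIMSEQ_le_const[OF lim[OF x q]]) (auto intro!: exI[of _ 0] hb_nonneg[OF b0' b1'] q x)
    show "H x q \<le> real x + K"
      by (rule LIMSEQ_le_const2[OF lim[OF x q]]) (auto intro!: exI[of _ 0] hb_bound[OF b0' b1'] q x)
    show "H x q \<le> H (x+1) q"
      by (rule LIMSEQ_le[OF lim[OF x q] lim]) (use x q in \<open>auto intro!: exI[of _ 0] hb_mono[OF b0' b1']\<close>)
    have "(\<lambda>k. hb (bet (r k)) x q) \<longlonglongrightarrow> real x - 1 + min (1 * PP (H (x+1)) q) (c q) - min (1 * PP (H 2) q) (c q)"
      unfolding hb_eq[OF b0' b1' q]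
      by (intro tendsto_intros blim PP_tendsto lim) auto
    then show "H x q = real x - 1 + min (PP (H (x+1)) q) (c q) - min (PP (H 2) q) (c q)"
      using LIMSEQ_unique[OF lim[OF x q]] by simp
  qed
qed

end


definition phi :: "nat \<Rightarrow> real" where "phi x = real x * (real x - 1) / 2"

lemma phi_nonneg: "0 \<le> phi x"
  unfolding phi_def by (cases x) auto

lemma phi_Suc: "phi (Suc x) = phi x + real x"
  unfolding phi_def by (simp add: field_simps)

lemma phi_lower: "0 \<le> k \<Longrightarrow> (k::real) * real x - (k+1)^2/2 \<le> phi x"
proof -
  assume k: "0 \<le> k"
  have e: "phi x - (k * real x - (k+1)^2/2) = ((real x - k - 1/2)^2 + k + 3/4)/2"
    unfolding phi_def by (simp add: power2_eq_square field_simps)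
  have "0 \<le> ((real x - k - 1/2)^2 + k + 3/4)/2" using k by simp
  then show ?thesis using e by simp
qed

context mdp
begin

lemma DD_const: "q \<in> {1..Q} \<Longrightarrow> DD Q p (\<lambda>_. a) T q = a * real T"
proof (induction T arbitrary: q)
  case 0 then show ?case by simp
next
  case (Suc T)
  have "(\<Sum>q'\<in>{1..Q}. p q q' * DD Q p (\<lambda>_. a) T q') = (\<Sum>q'\<in>{1..Q}. p q q' * (a * real T))"
    using Suc.IH by (intro sum.cong) auto
  also have "\<dots> = a * real T" using PP_const[OF Suc.prems] unfolding PP_def .
  finally show ?case by (simp add: algebra_simps)
qed

lemma ev_zero: "ev Q p \<pi> (\<lambda>_ _. 0) (\<lambda>_. 0) T h st = 0"
  by (induction T arbitrary: h st) auto

lemma policy_exists: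
  "\<exists>\<mu> H d. (\<forall>x q. \<mu> x q \<in> {0,1}) \<and>
     (\<forall>q\<in>{1..Q}. \<exists>\<tau>::nat. \<forall>x\<ge>1. \<mu> x q = (if x \<ge> \<tau> then 1 else 0)) \<and>
     (\<forall>st. valid_st Q st \<longrightarrow> 0 \<le> H st \<and> H st \<le> real (fst st) + K) \<and>
     (\<forall>st s. valid_st Q st \<longrightarrow> s \<in> {0,1} \<longrightarrow>
        d (snd st) + H st \<le> (real (fst st) + real s * c (snd st)) +
          (\<Sum>q'\<in>{1..Q}. p (snd st) q' * H (next_age (fst st) s, q'))) \<and>
     (\<forall>st. valid_st Q st \<longrightarrow>
        (real (fst st) + real (\<mu> (fst st) (snd st)) * c (snd st)) +
          (\<Sum>q'\<in>{1..Q}. p (snd st) q' * H (next_age (fst st) (\<mu> (fst st) (snd st)), q'))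
          \<le> d (snd st) + H st)"
proof -
  obtain Hf where H1: "\<And>q. q \<in> {1..Q} \<Longrightarrow> Hf 1 q = 0"
    and Hp: "\<And>x q. 1 \<le> x \<Longrightarrow> q \<in> {1..Q} \<Longrightarrow> 0 \<le> Hf x q \<and> Hf x q \<le> real x + K \<and> Hf x q \<le> Hf (x+1) q \<and>
          Hf x q = real x - 1 + min (PP (Hf (x+1)) q) (c q) - min (PP (Hf 2) q) (c q)"
    using exists_h by blast
  have Hnn: "0 \<le> Hf x q" if "1 \<le> x" "q \<in> {1..Q}" for x q using Hp[OF that] by blast
  have Hle: "Hf x q \<le> real x + K" if "1 \<le> x" "q \<in> {1..Q}" for x q using Hp[OF that] by blast
  have Hmono: "Hf x q \<le> Hf y q" if "1 \<le> x" "x \<le> y" "q \<in> {1..Q}" for x y q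
    using that(2,1)
  proof (induction y rule: dec_induct)
    case base then show ?case by simp
  next
    case (step n)
    then show ?case using Hp[of n q] that(3) by simp
  qed
  define Ph where "Ph t q = PP (Hf (t+1)) q" for t q
  have Ph_mono: "Ph t q \<le> Ph t' q" if "t \<le> t'" "q \<in> {1..Q}" for t t' q
    unfolding Ph_def by (rule PP_mono[OF that(2)], rule Hmono) (use that in auto)
  have Hlow: "real x - 1 - 2*K \<le> Hf x q" if "1 \<le> x" "q \<in> {1..Q}" for x q
  proof -
    have "0 \<le> PP (Hf (x+1)) q" using that by (intro PP_nonneg Hnn) auto
    then have "min (PP (Hf (x+1)) q) (c q) \<ge> - K" using K_ge[OF that(2)] by (auto simp: min_def)
    moreover have "min (PP (Hf 2) q) (c q) \<le> K" using K_ge[OF that(2)] by (auto simp: min_def)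
    ultimately show ?thesis using Hp[OF that] by linarith
  qed
  have Ph_low: "real t - 2*K \<le> Ph t q" if "q \<in> {1..Q}" for t q
  proof -
    have "PP (\<lambda>_. real t - 2*K) q \<le> Ph t q"
      unfolding Ph_def by (rule PP_mono[OF that]) (use Hlow[of "t+1"] in force)
    then show ?thesis using PP_const[OF that] by simp
  qed
  define \<tau> where "\<tau> q = (LEAST t. c q \<le> Ph t q)" for q
  have tau: "c q \<le> Ph t q \<longleftrightarrow> \<tau> q \<le> t" if q: "q \<in> {1..Q}" for q t
  proof
    assume "c q \<le> Ph t q" then show "\<tau> q \<le> t" unfolding \<tau>_def by (rule Least_le)
  next
    assume le: "\<tau> q \<le> t"
    define t0 where "t0 = nat \<lceil>3*K\<rceil> + 1"
    have "real t0 \<ge> 3*K + 1" unfolding t0_def by linarith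
    then have "c q \<le> Ph t0 q" using Ph_low[OF q, of t0] K_ge[OF q] by linarith
    then have "c q \<le> Ph (\<tau> q) q" unfolding \<tau>_def by (rule LeastI)
    then show "c q \<le> Ph t q" using Ph_mono[OF le q] by linarith
  qed
  define \<mu> where "\<mu> x q = (if \<tau> q \<le> x then 1 else 0::nat)" for x q
  define H where "H st = Hf (fst st) (snd st)" for st
  define d where "d q = 1 + min (PP (Hf 2) q) (c q)" for q
  have PP1: "PP (Hf 1) q = 0" if "q \<in> {1..Q}" for q
    unfolding PP_def using H1 by simp
  have eq: "d q + Hf x q = real x + min (Ph x q) (c q)" if "1 \<le> x" "q \<in> {1..Q}" for x q
    using Hp[OF that] unfolding d_def Ph_def by simp
  have sumH: "(\<Sum>q'\<in>{1..Q}. p q q' * H (next_age x s, q')) = (if s = 0 then Ph x q else PP (Hf 1) q)" for x q s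
    unfolding H_def Ph_def PP_def next_age_def by simp
  have H_st: "H (x,q) = Hf x q" for x q unfolding H_def by simp
  have sumHf: "(\<Sum>q'\<in>{1..Q}. p q q' * Hf (next_age x s) q') = (if s = 0 then Ph x q else PP (Hf 1) q)" for x q s
    unfolding Ph_def PP_def next_age_def by simp
  show ?thesis
  proof (intro exI[of _ \<mu>] exI[of _ H] exI[of _ d] conjI allI impI ballI)
    fix x q show "\<mu> x q \<in> {0,1}" unfolding \<mu>_def by simp
  next
    fix q show "\<exists>\<tau>::nat. \<forall>x\<ge>1. \<mu> x q = (if x \<ge> \<tau> then 1 else 0)"
      by (rule exI[of _ "\<tau> q"]) (simp add: \<mu>_def)
  next
    fix st :: state assume "valid_st Q st"
    then show "0 \<le> H st" "H st \<le> real (fst st) + K" using Hnn Hle unfolding H_def valid_st_def by auto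
  next
    fix st :: state and s :: nat assume v: "valid_st Q st" and s: "s \<in> {0,1}"
    obtain x q where st: "st = (x,q)" by (cases st)
    have x: "1 \<le> x" and q: "q \<in> {1..Q}" using v st by (auto simp: valid_st_def)
    show "d (snd st) + H st \<le> (real (fst st) + real s * c (snd st)) +
          (\<Sum>q'\<in>{1..Q}. p (snd st) q' * H (next_age (fst st) s, q'))"
      using s eq[OF x q] PP1[OF q] unfolding st fst_conv snd_conv H_st sumHf by (auto simp: min_def)
  next
    fix st :: state assume v: "valid_st Q st"
    obtain x q where st: "st = (x,q)" by (cases st)
    have x: "1 \<le> x" and q: "q \<in> {1..Q}" using v st by (auto simp: valid_st_def)
    show "(real (fst st) + real (\<mu> (fst st) (snd st)) * c (snd st)) +
          (\<Sum>q'\<in>{1..Q}. p (snd st) q' * H (next_age (fst st) (\<mu> (fst st) (snd st)), q'))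
          \<le> d (snd st) + H st"
      using eq[OF x q] PP1[OF q] tau[OF q, of x] unfolding st fst_conv snd_conv H_st sumHf
      by (auto simp: \<mu>_def min_def)
  qed
qed

lemma sum_p_const: "q \<in> {1..Q} \<Longrightarrow> (\<Sum>q'\<in>{1..Q}. p q q' * B) = B"
  using PP_const[of q B] unfolding PP_def .

lemma key:
  fixes cost :: "state \<Rightarrow> nat \<Rightarrow> real" and \<mu> :: "nat \<Rightarrow> nat \<Rightarrow> nat"
  assumes cost: "\<And>x q s. cost (x,q) s = real x + real s * c q"
    and mu01: "\<forall>x q. \<mu> x q \<in> {0,1}"
    and Hb: "\<forall>st. valid_st Q st \<longrightarrow> 0 \<le> H st \<and> H st \<le> real (fst st) + K"
    and low: "\<forall>st s. valid_st Q st \<longrightarrow> s \<in> {0,1} \<longrightarrow>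
        d (snd st) + H st \<le> (real (fst st) + real s * c (snd st)) +
          (\<Sum>q'\<in>{1..Q}. p (snd st) q' * H (next_age (fst st) s, q'))"
    and up: "\<forall>st. valid_st Q st \<longrightarrow>
        (real (fst st) + real (\<mu> (fst st) (snd st)) * c (snd st)) +
          (\<Sum>q'\<in>{1..Q}. p (snd st) q' * H (next_age (fst st) (\<mu> (fst st) (snd st)), q'))
          \<le> d (snd st) + H st"
    and pol: "valid_policy \<pi>" and x0: "1 \<le> x0" and q0: "q0 \<in> {1..Q}" and k: "0 < k"
  shows "ev Q p (stat_det \<mu>) cost (\<lambda>_. 0) T [] (x0,q0) \<le>
           ev Q p \<pi> cost (\<lambda>_. 0) T [] (x0,q0) +
           (ev Q p \<pi> cost (\<lambda>_. 0) T [] (x0,q0) + phi x0 + K * real T + (k+1)^2/2) / k + K"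
    and "- phi x0 - K * real T \<le> ev Q p \<pi> cost (\<lambda>_. 0) T [] (x0,q0)"
proof -
  define st0 where "st0 = (x0, q0)"
  have v0: "valid_st Q st0" using x0 q0 by (simp add: st0_def valid_st_def)
  have costst: "cost st s = real (fst st) + real s * c (snd st)" for st s by (cases st) (simp add: cost)
  define Jp where "Jp = ev Q p \<pi> cost (\<lambda>_. 0) T [] st0"
  define Jm where "Jm = ev Q p (stat_det \<mu>) cost (\<lambda>_. 0) T [] st0"
  define ET where "ET F = ev Q p \<pi> (\<lambda>_ _. 0) F T [] st0" for F
  have polm: "valid_policy (stat_det \<mu>)"
    unfolding valid_policy_def
  proof (intro conjI allI)
    fix h st s show "0 \<le> stat_det \<mu> h st s" by (simp add: stat_det_def)
  next
    fix h and st :: state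
    have "\<mu> (fst st) (snd st) = 0 \<or> \<mu> (fst st) (snd st) = 1" using mu01 by simp
    then show "stat_det \<mu> h st 0 + stat_det \<mu> h st 1 = 1" by (auto simp: stat_det_def)
  qed
  have A: "H st0 + DD Q p d T (snd st0) \<le> ev Q p \<pi> cost H T [] st0"
    by (rule bellman_lower[OF pol v0], unfold costst) (use low in blast)
  have B: "ev Q p (stat_det \<mu>) cost H T [] st0 \<le> H st0 + DD Q p d T (snd st0)"
    by (rule bellman_upper[OF v0], unfold costst) (use up mu01 in blast)
  have B0: "0 \<le> ev Q p (stat_det \<mu>) (\<lambda>_ _. 0) H T [] st0"
    using ev_mono[OF polm v0, of "\<lambda>_. 0" H T "[]"] Hb ev_zero by simp
  have JmJp: "Jm \<le> Jp + ET H"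
    using A B B0 ev_lin[of Q p \<pi> cost H T "[]" st0] ev_lin[of Q p "stat_det \<mu>" cost H T "[]" st0]
    unfolding Jm_def Jp_def ET_def by linarith
  have C: "ET H \<le> ET (\<lambda>st. real (fst st)) + K"
  proof -
    have "ET H \<le> ET (\<lambda>st. real (fst st) + K)"
      unfolding ET_def by (rule ev_mono[OF pol v0]) (use Hb in blast)
    then show ?thesis unfolding ET_def using ev_add_const[OF pol v0] by simp
  qed
  have D0: "- phi (fst st0) + DD Q p (\<lambda>_. -K) T (snd st0) \<le> ev Q p \<pi> cost (\<lambda>st. - phi (fst st)) T [] st0"
  proof (rule bellman_lower[OF pol v0])
    fix st :: state and s :: nat assume v: "valid_st Q st" and s: "s \<in> {0,1}"
    obtain x q where st: "st = (x,q)" by (cases st)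
    have q: "q \<in> {1..Q}" and x: "1 \<le> x" using v st by (auto simp: valid_st_def)
    have "(\<Sum>q'\<in>{1..Q}. p q q' * - phi (next_age x s)) = - phi (next_age x s)"
      by (rule sum_p_const[OF q])
    moreover have "- K - phi x \<le> real x + real s * c q - phi (next_age x s)"
    proof -
      have p1: "phi 1 = 0" by (simp add: phi_def)
      have "next_age x 0 = Suc x" "next_age x 1 = 1" by (auto simp: next_age_def)
      then show ?thesis using s K_ge[OF q] K_nonneg phi_nonneg[of x] p1 phi_Suc[of x] by auto
    qed
    ultimately show "- K + - phi (fst st) \<le> cost st s + (\<Sum>q'\<in>{1..Q}. p (snd st) q' * - phi (fst (next_age (fst st) s, q')))"
      by (simp add: st cost)
  qed
  have D1: "ev Q p \<pi> cost (\<lambda>st. - phi (fst st)) T [] st0 = Jp - ET (\<lambda>st. phi (fst st))"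
    using ev_lin[of Q p \<pi> cost "\<lambda>st. - phi (fst st)" T "[]" st0]
      ev_scale[of Q p \<pi> "-1" "\<lambda>st. phi (fst st)" T "[]" st0]
    unfolding Jp_def ET_def by simp
  have D2: "DD Q p (\<lambda>_. -K) T (snd st0) = - K * real T" using DD_const q0 by (simp add: st0_def)
  have D: "ET (\<lambda>st. phi (fst st)) - phi x0 - K * real T \<le> Jp"
    using D0 D1 D2 by (simp add: st0_def)
  have E0: "0 \<le> ET (\<lambda>st. phi (fst st))"
    using ev_mono[OF pol v0, of "\<lambda>_. 0" "\<lambda>st. phi (fst st)" T "[]"] phi_nonneg ev_zero
    unfolding ET_def by simp
  have E: "k * ET (\<lambda>st. real (fst st)) - (k+1)^2/2 \<le> ET (\<lambda>st. phi (fst st))"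
  proof -
    have "ET (\<lambda>st. k * real (fst st) + (-((k+1)^2/2))) \<le> ET (\<lambda>st. phi (fst st))"
      unfolding ET_def by (rule ev_mono[OF pol v0]) (use phi_lower k in simp)
    moreover have "ET (\<lambda>st. k * real (fst st) + (-((k+1)^2/2))) = k * ET (\<lambda>st. real (fst st)) - (k+1)^2/2"
      unfolding ET_def using ev_add_const[OF pol v0, of "\<lambda>st. k * real (fst st)" "-((k+1)^2/2)" T "[]"]
        ev_scale[of Q p \<pi> k "\<lambda>st. real (fst st)" T "[]" st0] by simp
    ultimately show ?thesis by simp
  qed
  have e: "ET (\<lambda>st. real (fst st)) \<le> (Jp + phi x0 + K * real T + (k+1)^2/2) / k"
    using D E k by (simp add: field_simps)
  show "Jm \<le> Jp + (Jp + phi x0 + K * real T + (k+1)^2/2) / k + K"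
    using JmJp C e by linarith
  show "- phi x0 - K * real T \<le> Jp" using D E0 by linarith
qed

lemma avg_opt:
  fixes cost :: "state \<Rightarrow> nat \<Rightarrow> real" and \<mu> :: "nat \<Rightarrow> nat \<Rightarrow> nat"
  assumes cost: "\<And>x q s. cost (x,q) s = real x + real s * c q"
    and mu01: "\<forall>x q. \<mu> x q \<in> {0,1}"
    and Hb: "\<forall>st. valid_st Q st \<longrightarrow> 0 \<le> H st \<and> H st \<le> real (fst st) + K"
    and low: "\<forall>st s. valid_st Q st \<longrightarrow> s \<in> {0,1} \<longrightarrow>
        d (snd st) + H st \<le> (real (fst st) + real s * c (snd st)) +
          (\<Sum>q'\<in>{1..Q}. p (snd st) q' * H (next_age (fst st) s, q'))"
    and up: "\<forall>st. valid_st Q st \<longrightarrow>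
        (real (fst st) + real (\<mu> (fst st) (snd st)) * c (snd st)) +
          (\<Sum>q'\<in>{1..Q}. p (snd st) q' * H (next_age (fst st) (\<mu> (fst st) (snd st)), q'))
          \<le> d (snd st) + H st"
    and pol: "valid_policy \<pi>" and x0: "1 \<le> x0" and q0: "q0 \<in> {1..Q}"
  shows "limsup (\<lambda>T. ereal (ev Q p (stat_det \<mu>) cost (\<lambda>_. 0) T [] (x0,q0) / real T))
       \<le> limsup (\<lambda>T. ereal (ev Q p \<pi> cost (\<lambda>_. 0) T [] (x0,q0) / real T))"
proof -
  define Jm where "Jm T = ev Q p (stat_det \<mu>) cost (\<lambda>_. 0) T [] (x0,q0)" for T
  define Jp where "Jp T = ev Q p \<pi> cost (\<lambda>_. 0) T [] (x0,q0)" for T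
  note K1 = key[OF cost mu01 Hb low up pol x0 q0]
  have kin: "Jm T \<le> Jp T + (Jp T + phi x0 + K * real T + (k+1)^2/2) / k + K" if "0 < k" for k T
    using K1(1)[OF that] unfolding Jm_def Jp_def .
  have lowJ: "- phi x0 - K * real T \<le> Jp T" for T
    using K1(2)[OF zero_less_one] unfolding Jp_def .
  define L where "L = limsup (\<lambda>T. ereal (Jp T / real T))"
  have Lge: "ereal (- K - phi x0) \<le> L"
    unfolding L_def
  proof (rule le_Limsup)
    show "(sequentially :: nat filter) \<noteq> bot" by simp
    show "\<forall>\<^sub>F T in sequentially. ereal (- K - phi x0) \<le> ereal (Jp T / real T)"
      using eventually_ge_at_top[of 1]
    proof (rule eventually_mono)
      fix T :: nat assume T: "1 \<le> T"
      have "- phi x0 - K * real T \<le> Jp T" by (rule lowJ)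
      moreover have "phi x0 \<le> phi x0 * real T" using T phi_nonneg[of x0]
        by (simp add: mult_le_cancel_left1)
      ultimately have "(- K - phi x0) * real T \<le> Jp T" by (simp add: algebra_simps)
      then show "ereal (- K - phi x0) \<le> ereal (Jp T / real T)"
        using T by (simp add: pos_le_divide_eq)
    qed
  qed
  show ?thesis
  proof (cases "L = \<infinity>")
    case True then show ?thesis unfolding L_def Jm_def Jp_def by simp
  next
    case False
    with Lge obtain r where r: "L = ereal r" by (cases L) auto
    have "limsup (\<lambda>T. ereal (Jm T / real T)) \<le> ereal r"
    proof (rule ereal_le_epsilon2)
      fix \<epsilon> :: real assume e: "0 < \<epsilon>"
      define \<delta> where "\<delta> = \<epsilon> / 4"
      have ev1: "\<forall>\<^sub>F T in sequentially. ereal (Jp T / real T) < ereal (r + \<delta>)"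
        by (rule Limsup_lessD) (use r e \<delta>_def L_def in simp)
      define k where "k = 4 * (\<bar>r\<bar> + \<delta> + K) / \<epsilon> + 1"
      have k0: "0 < k" unfolding k_def using e K_nonneg \<delta>_def by (simp add: add_pos_nonneg)
      have kb: "(r + \<delta> + K) / k \<le> \<epsilon> / 4"
      proof -
        have "4 * (\<bar>r\<bar> + \<delta> + K) / \<epsilon> \<le> k" unfolding k_def by simp
        then have "4 * (\<bar>r\<bar> + \<delta> + K) \<le> k * \<epsilon>" using e by (simp add: pos_divide_le_eq)
        then have "r + \<delta> + K \<le> \<epsilon> / 4 * k" by (simp add: algebra_simps)
        then show ?thesis using k0 by (simp add: pos_divide_le_eq)
      qed
      define M where "M = (phi x0 + (k+1)^2/2) / k + K"
      have ev2: "\<forall>\<^sub>F T in sequentially. nat \<lceil>4 * M / \<epsilon>\<rceil> + 1 \<le> T"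
        by (rule eventually_ge_at_top)
      have "\<forall>\<^sub>F T in sequentially. ereal (Jm T / real T) \<le> ereal r + ereal \<epsilon>"
        using ev1 ev2
      proof (rule eventually_elim2)
        fix T :: nat
        assume b: "ereal (Jp T / real T) < ereal (r + \<delta>)" and T: "nat \<lceil>4 * M / \<epsilon>\<rceil> + 1 \<le> T"
        have T0: "0 < real T" using T by simp
        have TM: "4 * M / \<epsilon> \<le> real T" using T by linarith
        then have TM': "M \<le> \<epsilon> / 4 * real T" using e by (simp add: pos_divide_le_eq algebra_simps)
        have Jp: "Jp T \<le> (r + \<delta>) * real T" using b T0 by (simp add: pos_divide_less_eq less_imp_le)
        have eqn: "Jp T + (Jp T + phi x0 + K * real T + (k+1)^2/2) / k + K
            = Jp T * (1 + 1/k) + K * real T / k + M"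
          unfolding M_def using k0 by (simp add: field_simps)
        have "Jp T * (1 + 1/k) \<le> (r + \<delta>) * real T * (1 + 1/k)"
          using Jp k0 by (intro mult_right_mono) auto
        moreover have "(r + \<delta>) * real T * (1 + 1/k) + K * real T / k = (r + \<delta>) * real T + (r + \<delta> + K) / k * real T"
          using k0 by (simp add: field_simps)
        moreover have "(r + \<delta> + K) / k * real T \<le> \<epsilon> / 4 * real T"
          using kb T0 by (intro mult_right_mono) auto
        ultimately have "Jm T \<le> (r + \<delta>) * real T + \<epsilon> / 4 * real T + \<epsilon> / 4 * real T"
          using kin[OF k0, of T] eqn TM' by linarith
        also have "\<dots> \<le> (r + \<epsilon>) * real T" using e T0 unfolding \<delta>_def by (simp add: algebra_simps)
        finally have "Jm T / real T \<le> r + \<epsilon>" using T0 by (simp add: pos_divide_le_eq)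
        then show "ereal (Jm T / real T) \<le> ereal r + ereal \<epsilon>" by simp
      qed
      then show "limsup (\<lambda>T. ereal (Jm T / real T)) \<le> ereal r + ereal \<epsilon>"
        by (rule Limsup_bounded)
    qed
    then show ?thesis using r unfolding L_def Jm_def Jp_def by simp
  qed
qed

end


theorem lemma1:
  fixes Q :: nat and p :: "nat \<Rightarrow> nat \<Rightarrow> real" and W lam :: real and \<omega> :: "nat \<Rightarrow> real"
  assumes "Q \<ge> 1"
    and "\<forall>q\<in>{1..Q}. \<forall>q'\<in>{1..Q}. 0 \<le> p q q'"
    and "\<forall>q\<in>{1..Q}. (\<Sum>q'\<in>{1..Q}. p q q') = 1"
    and "W \<ge> 0" and "lam \<ge> 0"
  shows "\<exists>\<mu> :: nat \<Rightarrow> nat \<Rightarrow> nat.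
           (\<forall>x0 \<ge> 1. \<forall>q0\<in>{1..Q}. \<forall>\<pi>. valid_policy \<pi> \<longrightarrow>
               avg_cost Q p W lam \<omega> (stat_det \<mu>) (x0, q0) \<le> avg_cost Q p W lam \<omega> \<pi> (x0, q0))
         \<and> (\<forall>q\<in>{1..Q}. \<exists>\<tau>::nat. \<forall>x \<ge> 1. \<mu> x q = (if x \<ge> \<tau> then 1 else 0))"
proof -
  define c where "c q = W + lam * \<omega> q" for q
  define K where "K = (\<Sum>q\<in>{1..Q}. \<bar>c q\<bar>)"
  interpret M: mdp Q p c K
  proof (unfold_locales)
    show "Q \<ge> 1" using assms(1) .
    show "\<And>q q'. q \<in> {1..Q} \<Longrightarrow> q' \<in> {1..Q} \<Longrightarrow> 0 \<le> p q q'" using assms(2) by blast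
    show "\<And>q. q \<in> {1..Q} \<Longrightarrow> (\<Sum>q'\<in>{1..Q}. p q q') = 1" using assms(3) by blast
    show "\<And>q. q \<in> {1..Q} \<Longrightarrow> \<bar>c q\<bar> \<le> K"
      unfolding K_def by (rule member_le_sum) auto
  qed
  obtain \<mu> H d where mu01: "\<forall>x q. \<mu> x q \<in> {0,1}"
    and thr: "\<forall>q\<in>{1..Q}. \<exists>\<tau>::nat. \<forall>x\<ge>1. \<mu> x q = (if x \<ge> \<tau> then 1 else 0)"
    and Hb: "\<forall>st. valid_st Q st \<longrightarrow> 0 \<le> H st \<and> H st \<le> real (fst st) + K"
    and low: "\<forall>st s. valid_st Q st \<longrightarrow> s \<in> {0,1} \<longrightarrow>
        d (snd st) + H st \<le> (real (fst st) + real s * c (snd st)) +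
          (\<Sum>q'\<in>{1..Q}. p (snd st) q' * H (next_age (fst st) s, q'))"
    and up: "\<forall>st. valid_st Q st \<longrightarrow>
        (real (fst st) + real (\<mu> (fst st) (snd st)) * c (snd st)) +
          (\<Sum>q'\<in>{1..Q}. p (snd st) q' * H (next_age (fst st) (\<mu> (fst st) (snd st)), q'))
          \<le> d (snd st) + H st"
    using M.policy_exists by blast
  define cost where "cost st s = C_X W (fst st) (snd st) s + lam * C_Q \<omega> (fst st) (snd st) s" for st s
  have cost: "cost (x,q) s = real x + real s * c q" for x q s
    unfolding cost_def C_X_def C_Q_def c_def by (simp add: algebra_simps)
  show ?thesis
  proof (intro exI[of _ \<mu>] conjI allI impI ballI)
    fix x0 :: nat and q0 \<pi> assume x0: "1 \<le> x0" and q0: "q0 \<in> {1..Q}" and pol: "valid_policy \<pi>"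
    show "avg_cost Q p W lam \<omega> (stat_det \<mu>) (x0, q0) \<le> avg_cost Q p W lam \<omega> \<pi> (x0, q0)"
      unfolding avg_cost_def exp_cost_ev cost_def[symmetric]
      using M.avg_opt[OF cost mu01 Hb low up pol x0 q0] .
  next
    fix q assume "q \<in> {1..Q}"
    then show "\<exists>\<tau>::nat. \<forall>x\<ge>1. \<mu> x q = (if x \<ge> \<tau> then 1 else 0)" using thr by blast
  qed
qed

end
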